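(* Let $(X,\mathfrak{M},m)$ be a $\sigma$-finite measure space and let $f:X\to[0,\infty)$ be a probability density function with respect to $m$. Then for every $\beta\ge 0$, $$P_f(\{x\in X: pv_f(x)\le \beta\})\le \beta \qquad\text{and}\qquad P_f(\{x\in X: pv_f(x)>\beta\})\ge 1-\beta .$$ Moreover, equality holds in both inequalities if and only if $\beta=\sup\{pv_f(x): x\in X,\ pv_f(x)\le\beta\}$ (with the convention $\sup\emptyset=0$).
   Context: $f$ is a measurable function $f:X\to[0,\infty)$ with $\int_X f\,dm=1$. For a measurable set $S\in\mathfrak{M}$, $P_f(S):=\int_S f\,dm$. The p-value of $x\in X$ with respect to $f$ is $$pv_f(x):=\int_{\{t\in X:\ f(t)\le f(x)\}} f\,dm = P_f(\{t: f(t)\le f(x)\})\in[0,1].$$ *)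

theory Defs
  imports "HOL-Analysis.Analysis"
begin

definition Pf :: "'a measure \<Rightarrow> ('a \<Rightarrow> real) \<Rightarrow> 'a set \<Rightarrow> real" where
  "Pf M f S = (\<integral>x\<in>S. f x \<partial>M)"

definition pv :: "'a measure \<Rightarrow> ('a \<Rightarrow> real) \<Rightarrow> 'a \<Rightarrow> real" where
  "pv M f x = Pf M f {t \<in> space M. f t \<le> f x}"

definition sup0 :: "real set \<Rightarrow> real" where
  "sup0 S = (if S = {} then 0 else Sup S)"

end

theory Submission
  imports Defs
begin

lemma cofinal_seq:
  fixes g :: "'a \<Rightarrow> real"
  assumes "A \<noteq> {}"
  shows "\<exists>x::nat\<Rightarrow>'a. (\<forall>n. x n \<in> A) \<and> (\<forall>y\<in>A. \<exists>n. g y \<le> g (x n))"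
proof (cases "bdd_above (g ` A)")
  case True
  define c where "c = Sup (g ` A)"
  have ub: "g y \<le> c" if "y \<in> A" for y
    using True that unfolding c_def by (simp add: cSup_upper)
  show ?thesis
  proof (cases "\<exists>z\<in>A. g z = c")
    case True
    then obtain z where "z \<in> A" "g z = c" by blast
    then show ?thesis using ub by (intro exI[of _ "\<lambda>_. z"]) auto
  next
    case False
    have "\<forall>n::nat. \<exists>z\<in>A. c - 1/(real n+1) < g z"
    proof
      fix n :: nat
      have "c - 1/(real n+1) < Sup (g ` A)" unfolding c_def[symmetric] by simp
      then show "\<exists>z\<in>A. c - 1/(real n+1) < g z"
        using less_cSup_iff[of "g ` A"] True assms by auto
    qed
    then obtain x where x: "\<And>n. x n \<in> A" "\<And>n. c - 1/(real n+1) < g (x n)"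
      by metis
    show ?thesis
    proof (intro exI[of _ x] conjI allI ballI)
      fix n show "x n \<in> A" by (rule x(1))
    next
      fix y assume y: "y \<in> A"
      have "g y < c" using ub[OF y] False y by force
      then obtain n where n: "inverse (real (Suc n)) < c - g y"
        using reals_Archimedean[of "c - g y"] by auto
      have "g y < c - 1/(real n+1)" using n by (simp add: field_simps)
      then show "\<exists>n. g y \<le> g (x n)" using x(2)[of n] by (intro exI[of _ n]) linarith
    qed
  qed
next
  case False
  have "\<forall>n::nat. \<exists>z\<in>A. real n < g z"
    using False unfolding bdd_above_def by (auto simp: not_le)
  then obtain x where x: "\<And>n. x n \<in> A" "\<And>n. real n < g (x n)" by metis
  show ?thesis
  proof (intro exI[of _ x] conjI allI ballI)
    fix n show "x n \<in> A" by (rule x(1))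
  next
    fix y assume "y \<in> A"
    obtain n where "g y \<le> real n" using real_arch_simple by blast
    then show "\<exists>n. g y \<le> g (x n)" using x(2)[of n] by (intro exI[of _ n]) linarith
  qed
qed

theorem lemma1:
  fixes M :: "'a measure" and f :: "'a \<Rightarrow> real" and \<beta> :: real
  assumes "sigma_finite_measure M"
    and "f \<in> borel_measurable M"
    and "\<And>x. x \<in> space M \<Longrightarrow> 0 \<le> f x"
    and "integrable M f"
    and "(\<integral>x. f x \<partial>M) = 1"
    and "0 \<le> \<beta>"
  shows "Pf M f {x \<in> space M. pv M f x \<le> \<beta>} \<le> \<beta>
    \<and> Pf M f {x \<in> space M. pv M f x > \<beta>} \<ge> 1 - \<beta>
    \<and> ((Pf M f {x \<in> space M. pv M f x \<le> \<beta>} = \<beta>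
          \<and> Pf M f {x \<in> space M. pv M f x > \<beta>} = 1 - \<beta>)
        \<longleftrightarrow> \<beta> = sup0 {pv M f x | x. x \<in> space M \<and> pv M f x \<le> \<beta>})"
proof -
  note fm[measurable] = assms(2)
  have si: "set_integrable M S f" if "S \<in> sets M" for S
    using integrable_mult_indicator[OF that assms(4)] unfolding set_integrable_def .
  have Pmono: "Pf M f S \<le> Pf M f T" if "S \<in> sets M" "T \<in> sets M" "S \<subseteq> T" for S T
    unfolding Pf_def set_lebesgue_integral_def
    using that assms(3) integrable_mult_indicator[OF that(1) assms(4)]
      integrable_mult_indicator[OF that(2) assms(4)]
    by (intro integral_mono) (auto split: split_indicator)
  have Pnn: "0 \<le> Pf M f S" for S
    unfolding Pf_def set_lebesgue_integral_def
    using assms(3) by (intro integral_nonneg_AE AE_I2) (auto split: split_indicator)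
  have Pcompl: "Pf M f (space M - S) = 1 - Pf M f S" if "S \<in> sets M" for S
  proof -
    have "Pf M f (space M - S) = (\<integral>x. f x - indicator S x *\<^sub>R f x \<partial>M)"
      unfolding Pf_def set_lebesgue_integral_def
      by (intro Bochner_Integration.integral_cong) (auto split: split_indicator)
    also have "\<dots> = 1 - Pf M f S"
      unfolding Pf_def set_lebesgue_integral_def
      using assms(5) integrable_mult_indicator[OF that assms(4)] assms(4) by simp
    finally show ?thesis .
  qed
  define F where "F s = Pf M f {t \<in> space M. f t \<le> s}" for s
  have pvF: "pv M f x = F (f x)" for x unfolding pv_def F_def ..
  have Fmono: "mono F"
    unfolding mono_def F_def by (intro allI impI Pmono) auto
  have Fm[measurable]: "F \<in> borel_measurable borel" by (rule borel_measurable_mono[OF Fmono])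
  define A where "A = {x \<in> space M. F (f x) \<le> \<beta>}"
  define V where "V = {F (f x) | x. x \<in> space M \<and> F (f x) \<le> \<beta>}"
  have Am[measurable]: "A \<in> sets M" unfolding A_def by measurable
  have down: "t \<in> A" if "y \<in> A" "t \<in> space M" "f t \<le> f y" for t y
    using that monoD[OF Fmono, of "f t" "f y"] unfolding A_def by auto
  have g_le: "sup0 V \<le> \<beta>"
    unfolding sup0_def V_def using assms(6) by (auto intro!: cSup_least)
  have PA: "Pf M f A = sup0 V"
  proof (cases "A = {}")
    case True
    then have "V = {}" unfolding A_def V_def by auto
    then show ?thesis using True by (simp add: sup0_def Pf_def set_lebesgue_integral_def)
  next
    case ne: False
    have Vne: "V \<noteq> {}" using ne unfolding A_def V_def by auto
    have Vbdd: "bdd_above V" unfolding V_def bdd_above_def by auto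
    have sV: "sup0 V = Sup V" using Vne by (simp add: sup0_def)
    have ge: "Sup V \<le> Pf M f A"
    proof (rule cSup_least[OF Vne])
      fix v assume "v \<in> V"
      then obtain y where y: "y \<in> A" "v = F (f y)" unfolding V_def A_def by auto
      show "v \<le> Pf M f A" unfolding y(2) F_def
        by (rule Pmono) (use down y in auto)
    qed
    obtain x :: "nat \<Rightarrow> 'a" where x: "\<And>n. x n \<in> A" "\<And>y. y \<in> A \<Longrightarrow> \<exists>n. f y \<le> f (x n)"
      using cofinal_seq[OF ne, of f] by blast
    define m where "m n = Max (f ` x ` {..n})" for n
    have m_in: "m n \<in> f ` x ` {..n}" for n unfolding m_def by (intro Max_in) auto
    have m_ge: "f (x k) \<le> m n" if "k \<le> n" for k n
      unfolding m_def using that by (intro Max_ge) auto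
    have m_mono: "m n \<le> m n'" if "n \<le> n'" for n n'
    proof -
      obtain k where "k \<le> n" "m n = f (x k)" using m_in[of n] by auto
      then show ?thesis using m_ge[of k n'] that by simp
    qed
    define B where "B n = {t \<in> space M. f t \<le> m n}" for n
    have Bm[measurable]: "B n \<in> sets M" for n unfolding B_def by measurable
    have Binc: "incseq B" unfolding incseq_def B_def using m_mono by force
    have UB: "(\<Union>n. B n) = A"
    proof
      show "(\<Union>n. B n) \<subseteq> A"
      proof
        fix t assume "t \<in> (\<Union>n. B n)"
        then obtain n where t: "t \<in> space M" "f t \<le> m n" unfolding B_def by auto
        obtain k where "k \<le> n" "m n = f (x k)" using m_in[of n] by auto
        then show "t \<in> A" using down[OF x(1)[of k] t(1)] t by simp
      qed
    next
      show "A \<subseteq> (\<Union>n. B n)"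
      proof
        fix t assume t: "t \<in> A"
        obtain n where "f t \<le> f (x n)" using x(2)[OF t] by auto
        then have "f t \<le> m n" using m_ge[of n n] by simp
        then show "t \<in> (\<Union>n. B n)" using t unfolding B_def A_def by auto
      qed
    qed
    have lim: "(\<lambda>n. Pf M f (B n)) \<longlonglongrightarrow> Pf M f A"
      unfolding Pf_def UB[symmetric]
      by (rule set_integral_cont_up[OF Bm Binc]) (use si UB Am in auto)
    have bnd: "Pf M f (B n) \<le> Sup V" for n
    proof -
      obtain k where "k \<le> n" "m n = f (x k)" using m_in[of n] by auto
      then have "Pf M f (B n) = F (f (x k))" unfolding B_def F_def by simp
      moreover have "F (f (x k)) \<in> V" using x(1)[of k] unfolding A_def V_def by auto
      ultimately show ?thesis using cSup_upper[OF _ Vbdd] by simp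
    qed
    have "Pf M f A \<le> Sup V" using lim bnd by (intro LIMSEQ_le_const2) auto
    then show ?thesis using ge sV by simp
  qed
  have eqA: "{x \<in> space M. pv M f x \<le> \<beta>} = A" unfolding A_def pvF ..
  have eqB: "{x \<in> space M. pv M f x > \<beta>} = space M - A" unfolding A_def pvF by auto
  have eqV: "{pv M f x | x. x \<in> space M \<and> pv M f x \<le> \<beta>} = V" unfolding V_def pvF ..
  show ?thesis unfolding eqA eqB eqV Pcompl[OF Am] PA using g_le by auto
qed

end
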